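(* Let $n\geq 1$ and let $C$ be a CRC in $G_n$ with covering radius $\rho\geq 1$, $a_0=0$ and $a_1=1$. Then $c_1=1$, and there is a CRC $D$ in the ternary Hamming graph $H(n,3)$ with the same parameter matrix such that $C=\{x\in\mathbb{Z}^n: (x_1\bmod 3,\ldots,x_n\bmod 3)\in D\}$.
   Context: $G_n$: vertex set $\mathbb{Z}^n$, $x\sim y$ iff $\sum_i|x_i-y_i|=1$. $H(n,3)$: vertex set $\{0,1,2\}^n$, adjacent iff differing in exactly one coordinate. For a code $C$ in a graph with covering radius $\rho$, $C_i=\{v:d(v,C)=i\}$; $C$ is a CRC if for all $i,j$ every vertex of $C_i$ has the same number $\alpha_{ij}$ of neighbours in $C_j$, with $\alpha_{ij}=0$ for $|i-j|>1$; $a_i=\alpha_{ii}$, $b_i=\alpha_{i,i+1}$, $c_i=\alpha_{i,i-1}$, and the parameter matrix is $(\alpha_{ij})$. *)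

theory Defs
  imports Main
begin

fun walk :: "'a set \<Rightarrow> ('a \<Rightarrow> 'a \<Rightarrow> bool) \<Rightarrow> nat \<Rightarrow> 'a \<Rightarrow> 'a \<Rightarrow> bool" where
  "walk V E 0 u v = (u = v)"
| "walk V E (Suc k) u v = (\<exists>w\<in>V. E u w \<and> walk V E k w v)"

definition dist_to :: "'a set \<Rightarrow> ('a \<Rightarrow> 'a \<Rightarrow> bool) \<Rightarrow> 'a set \<Rightarrow> 'a \<Rightarrow> nat" where
  "dist_to V E C v = (LEAST k. \<exists>c\<in>C. walk V E k v c)"

definition has_covering_radius :: "'a set \<Rightarrow> ('a \<Rightarrow> 'a \<Rightarrow> bool) \<Rightarrow> 'a set \<Rightarrow> nat \<Rightarrow> bool" where
  "has_covering_radius V E C \<rho> \<longleftrightarrow>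
     (\<forall>v\<in>V. \<exists>c\<in>C. \<exists>k. walk V E k v c) \<and>
     (\<forall>v\<in>V. dist_to V E C v \<le> \<rho>) \<and> (\<exists>v\<in>V. dist_to V E C v = \<rho>)"

definition is_CRC :: "'a set \<Rightarrow> ('a \<Rightarrow> 'a \<Rightarrow> bool) \<Rightarrow> 'a set \<Rightarrow> nat \<Rightarrow> (nat \<Rightarrow> nat \<Rightarrow> nat) \<Rightarrow> bool" where
  "is_CRC V E C \<rho> \<alpha> \<longleftrightarrow>
     C \<subseteq> V \<and> has_covering_radius V E C \<rho> \<and>
     (\<forall>i\<le>\<rho>. \<forall>j\<le>\<rho>. \<forall>v\<in>V. dist_to V E C v = i \<longrightarrow>
         card {w\<in>V. E v w \<and> dist_to V E C w = j} = \<alpha> i j) \<and>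
     (\<forall>i\<le>\<rho>. \<forall>j\<le>\<rho>. (i + 1 < j \<or> j + 1 < i) \<longrightarrow> \<alpha> i j = 0)"

definition Gn_verts :: "nat \<Rightarrow> (nat \<Rightarrow> int) set" where
  "Gn_verts n = {x. \<forall>i\<ge>n. x i = 0}"

definition Gn_adj :: "nat \<Rightarrow> (nat \<Rightarrow> int) \<Rightarrow> (nat \<Rightarrow> int) \<Rightarrow> bool" where
  "Gn_adj n x y \<longleftrightarrow> (\<Sum>i<n. \<bar>x i - y i\<bar>) = 1"

definition H3_verts :: "nat \<Rightarrow> (nat \<Rightarrow> nat) set" where
  "H3_verts n = {x. (\<forall>i<n. x i < 3) \<and> (\<forall>i\<ge>n. x i = 0)}"

definition H3_adj :: "nat \<Rightarrow> (nat \<Rightarrow> nat) \<Rightarrow> (nat \<Rightarrow> nat) \<Rightarrow> bool" where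
  "H3_adj n x y \<longleftrightarrow> card {i. i < n \<and> x i \<noteq> y i} = 1"

definition mod3 :: "(nat \<Rightarrow> int) \<Rightarrow> (nat \<Rightarrow> nat)" where
  "mod3 x = (\<lambda>i. nat (x i mod 3))"

end

theory Submission
  imports Defs
begin


lemma walk_dist_le: "walk V E k v c \<Longrightarrow> c \<in> C \<Longrightarrow> dist_to V E C v \<le> k"
  unfolding dist_to_def by (rule Least_le) blast

lemma dist_ex: "\<exists>c\<in>C. \<exists>k. walk V E k v c \<Longrightarrow> \<exists>c\<in>C. walk V E (dist_to V E C v) v c"
  unfolding dist_to_def by (rule LeastI_ex) blast

lemma dist0: "v \<in> C \<Longrightarrow> dist_to V E C v = 0"
  using walk_dist_le[of V E 0 v v C] by simp

lemma dist0_iff: "\<exists>c\<in>C. \<exists>k. walk V E k v c \<Longrightarrow> dist_to V E C v = 0 \<Longrightarrow> v \<in> C"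
  using dist_ex[of C V E v] by auto

lemma dist_adj: "w \<in> V \<Longrightarrow> E v w \<Longrightarrow> \<exists>c\<in>C. \<exists>k. walk V E k w c \<Longrightarrow> dist_to V E C v \<le> dist_to V E C w + 1"
proof -
  assume a: "w \<in> V" "E v w" "\<exists>c\<in>C. \<exists>k. walk V E k w c"
  from dist_ex[OF a(3)] obtain c where "c \<in> C" "walk V E (dist_to V E C w) w c" by blast
  hence "walk V E (Suc (dist_to V E C w)) v c" using a by auto
  from walk_dist_le[OF this \<open>c\<in>C\<close>] show ?thesis by simp
qed

lemma walk_map:
  assumes hom: "\<And>x w. x \<in> V \<Longrightarrow> w \<in> V \<Longrightarrow> E x w \<Longrightarrow> E' (p x) (p w)"
    and pV: "\<And>x. x \<in> V \<Longrightarrow> p x \<in> V'"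
  shows "x \<in> V \<Longrightarrow> walk V E k x c \<Longrightarrow> walk V' E' k (p x) (p c)"
proof (induction k arbitrary: x)
  case 0 then show ?case by simp
next
  case (Suc k)
  then obtain w where w: "w \<in> V" "E x w" "walk V E k w c" by auto
  have "walk V' E' k (p w) (p c)" using Suc.IH w by blast
  moreover have "E' (p x) (p w)" using hom Suc.prems(1) w by blast
  ultimately show ?case using pV w(1) by auto
qed

lemma walk_lift:
  assumes lift: "\<And>x w'. x \<in> V \<Longrightarrow> w' \<in> V' \<Longrightarrow> E' (p x) w' \<Longrightarrow> \<exists>w\<in>V. E x w \<and> p w = w'"
  shows "x \<in> V \<Longrightarrow> walk V' E' k (p x) h \<Longrightarrow> \<exists>c\<in>V. p c = h \<and> walk V E k x c"
proof (induction k arbitrary: x)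
  case 0 then show ?case by auto
next
  case (Suc k)
  then obtain w' where "w' \<in> V'" "E' (p x) w'" "walk V' E' k w' h" by auto
  with lift[OF Suc.prems(1)] obtain w where "w \<in> V" "E x w" "p w = w'" by blast
  with Suc.IH[of w] \<open>walk V' E' k w' h\<close> obtain c where "c\<in>V" "p c = h" "walk V E k w c" by auto
  then show ?case using \<open>w \<in> V\<close> \<open>E x w\<close> by auto
qed

lemma cover_CRC:
  assumes crc: "is_CRC V E C \<rho> \<alpha>"
    and pV: "\<And>x. x \<in> V \<Longrightarrow> p x \<in> V'"
    and surj: "\<And>h. h \<in> V' \<Longrightarrow> \<exists>x\<in>V. p x = h"
    and nb: "\<And>x. x \<in> V \<Longrightarrow> {w'\<in>V'. E' (p x) w'} = p ` {w\<in>V. E x w}"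
    and inj: "\<And>x. x \<in> V \<Longrightarrow> inj_on p {w\<in>V. E x w}"
    and CD: "C = {x\<in>V. p x \<in> D}"
    and DV: "D \<subseteq> V'"
  shows "is_CRC V' E' D \<rho> \<alpha>"
proof -
  have hom: "\<And>x w. x \<in> V \<Longrightarrow> w \<in> V \<Longrightarrow> E x w \<Longrightarrow> E' (p x) (p w)"
  proof -
    fix x w assume "x \<in> V" "w \<in> V" "E x w"
    then have "p w \<in> p ` {w\<in>V. E x w}" by auto
    then show "E' (p x) (p w)" using nb[OF \<open>x\<in>V\<close>] by auto
  qed
  have lift: "\<And>x w'. x \<in> V \<Longrightarrow> w' \<in> V' \<Longrightarrow> E' (p x) w' \<Longrightarrow> \<exists>w\<in>V. E x w \<and> p w = w'"
  proof -
    fix x w' assume "x \<in> V" "w' \<in> V'" "E' (p x) w'"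
    then have "w' \<in> p ` {w\<in>V. E x w}" using nb[OF \<open>x\<in>V\<close>] by auto
    then show "\<exists>w\<in>V. E x w \<and> p w = w'" by auto
  qed
  have walks: "{k. \<exists>c\<in>C. walk V E k x c} = {k. \<exists>d\<in>D. walk V' E' k (p x) d}" if "x \<in> V" for x
  proof (intro set_eqI iffI; simp)
    fix k assume "\<exists>c\<in>C. walk V E k x c"
    then obtain c where "c \<in> C" "walk V E k x c" by blast
    then have "walk V' E' k (p x) (p c)" using walk_map[of V E E' p V', OF hom pV that] by blast
    then show "\<exists>d\<in>D. walk V' E' k (p x) d" using CD \<open>c \<in> C\<close> by blast
  next
    fix k assume "\<exists>d\<in>D. walk V' E' k (p x) d"
    then obtain d where "d \<in> D" "walk V' E' k (p x) d" by blast
    from walk_lift[of V V' E' p E, OF lift that this(2)] obtain c where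
      "c\<in>V" "p c = d" "walk V E k x c" by blast
    then show "\<exists>c\<in>C. walk V E k x c" using CD \<open>d\<in>D\<close> by blast
  qed
  have dist: "dist_to V' E' D (p x) = dist_to V E C x" if "x \<in> V" for x
  proof -
    have eq: "(\<lambda>k. \<exists>d\<in>D. walk V' E' k (p x) d) = (\<lambda>k. \<exists>c\<in>C. walk V E k x c)"
      using walks[OF that] by (simp add: fun_eq_iff set_eq_iff)
    show ?thesis unfolding dist_to_def eq ..
  qed
  from crc have CV: "C \<subseteq> V" and reach: "\<forall>v\<in>V. \<exists>c\<in>C. \<exists>k. walk V E k v c"
    and le: "\<forall>v\<in>V. dist_to V E C v \<le> \<rho>" and ex: "\<exists>v\<in>V. dist_to V E C v = \<rho>"
    and cnt: "\<forall>i\<le>\<rho>. \<forall>j\<le>\<rho>. \<forall>v\<in>V. dist_to V E C v = i \<longrightarrow>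
         card {w\<in>V. E v w \<and> dist_to V E C w = j} = \<alpha> i j"
    and z: "\<forall>i\<le>\<rho>. \<forall>j\<le>\<rho>. (i + 1 < j \<or> j + 1 < i) \<longrightarrow> \<alpha> i j = 0"
    unfolding is_CRC_def has_covering_radius_def by auto
  have "\<forall>v\<in>V'. \<exists>c\<in>D. \<exists>k. walk V' E' k v c"
  proof
    fix h assume "h \<in> V'"
    then obtain x where "x \<in> V" "p x = h" using surj by blast
    then show "\<exists>c\<in>D. \<exists>k. walk V' E' k h c" using walks[OF \<open>x\<in>V\<close>] reach by blast
  qed
  moreover have "\<forall>v\<in>V'. dist_to V' E' D v \<le> \<rho>"
  proof
    fix h assume "h \<in> V'"
    then obtain x where "x \<in> V" "p x = h" using surj by blast
    then show "dist_to V' E' D h \<le> \<rho>" using dist le by auto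
  qed
  moreover have "\<exists>v\<in>V'. dist_to V' E' D v = \<rho>"
  proof -
    obtain x where "x \<in> V" "dist_to V E C x = \<rho>" using ex by blast
    then show ?thesis using dist pV by auto
  qed
  moreover have "\<forall>i\<le>\<rho>. \<forall>j\<le>\<rho>. \<forall>v\<in>V'. dist_to V' E' D v = i \<longrightarrow>
         card {w\<in>V'. E' v w \<and> dist_to V' E' D w = j} = \<alpha> i j"
  proof (intro allI impI ballI)
    fix i j h assume ij: "i \<le> \<rho>" "j \<le> \<rho>" and "h \<in> V'" and di: "dist_to V' E' D h = i"
    then obtain x where x: "x \<in> V" "p x = h" using surj by blast
    have "{w\<in>V'. E' h w \<and> dist_to V' E' D w = j} = p ` {w\<in>V. E x w \<and> dist_to V E C w = j}"
    proof -
      have "{w\<in>V'. E' h w \<and> dist_to V' E' D w = j} = {w'\<in>{w'\<in>V'. E' (p x) w'}. dist_to V' E' D w' = j}"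
        using x by auto
      also have "\<dots> = {w'\<in> p ` {w\<in>V. E x w}. dist_to V' E' D w' = j}" using nb[OF x(1)] by simp
      also have "\<dots> = p ` {w\<in>V. E x w \<and> dist_to V E C w = j}"
        using dist by auto
      finally show ?thesis .
    qed
    moreover have "inj_on p {w\<in>V. E x w \<and> dist_to V E C w = j}"
      by (rule inj_on_subset[OF inj[OF x(1)]]) auto
    ultimately have "card {w\<in>V'. E' h w \<and> dist_to V' E' D w = j} = card {w\<in>V. E x w \<and> dist_to V E C w = j}"
      by (simp add: card_image)
    also have "\<dots> = \<alpha> i j" using cnt ij x di dist by auto
    finally show "card {w\<in>V'. E' h w \<and> dist_to V' E' D w = j} = \<alpha> i j" .
  qed
  ultimately show ?thesis using z DV unfolding is_CRC_def has_covering_radius_def by blast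
qed




definition mv :: "(nat \<Rightarrow> int) \<Rightarrow> nat \<Rightarrow> int \<Rightarrow> (nat \<Rightarrow> int)" where
  "mv x i s = x(i := x i + s)"

lemma mv_V: "x \<in> Gn_verts n \<Longrightarrow> i < n \<Longrightarrow> mv x i s \<in> Gn_verts n"
  by (auto simp: Gn_verts_def mv_def)

lemma mv_eq: "s \<noteq> 0 \<Longrightarrow> t \<noteq> 0 \<Longrightarrow> mv x i s = mv x j t \<longleftrightarrow> i = j \<and> s = t"
  unfolding mv_def
  by (metis add.right_neutral add_left_cancel fun_upd_eqD fun_upd_other fun_upd_same)

lemma mv_comm: "i \<noteq> j \<Longrightarrow> mv (mv x i s) j t = mv (mv x j t) i s"
  unfolding mv_def by (auto simp: fun_upd_twist)

lemma mv_inv: "mv (mv x i s) i (-s) = x"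
  unfolding mv_def by auto

lemma Gn_adj_sym: "Gn_adj n x y = Gn_adj n y x"
  unfolding Gn_adj_def by (simp add: abs_minus_commute)

lemma Gn_adj_mv: "i < n \<Longrightarrow> s \<in> {1,-1} \<Longrightarrow> Gn_adj n x (mv x i s)"
proof -
  assume a: "i < n" "s \<in> {1,-1}"
  have "(\<Sum>k<n. \<bar>x k - mv x i s k\<bar>) = (\<Sum>k<n. if k = i then 1 else 0)"
    by (rule sum.cong) (use a in \<open>auto simp: mv_def\<close>)
  also have "\<dots> = 1" using a by simp
  finally show ?thesis unfolding Gn_adj_def .
qed

lemma Gn_adj_char:
  assumes "x \<in> Gn_verts n" "y \<in> Gn_verts n" "Gn_adj n x y"
  shows "\<exists>i<n. \<exists>s\<in>{1,-1}. y = mv x i s"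
proof -
  have S: "(\<Sum>k<n. \<bar>x k - y k\<bar>) = 1" using assms(3) unfolding Gn_adj_def .
  obtain i where i: "i < n" "x i \<noteq> y i"
  proof (rule ccontr)
    assume "\<not> thesis"
    with that have "\<forall>k<n. x k = y k" by blast
    then have "(\<Sum>k<n. \<bar>x k - y k\<bar>) = 0" by simp
    with S show False by simp
  qed
  have "(\<Sum>k<n. \<bar>x k - y k\<bar>) = \<bar>x i - y i\<bar> + (\<Sum>k\<in>{..<n}-{i}. \<bar>x k - y k\<bar>)"
    using i by (simp add: sum.remove)
  moreover have "(\<Sum>k\<in>{..<n}-{i}. \<bar>x k - y k\<bar>) \<ge> 0" by (rule sum_nonneg) simp
  moreover have "\<bar>x i - y i\<bar> \<ge> 1" using i by simp
  ultimately have e1: "\<bar>x i - y i\<bar> = 1" and e0: "(\<Sum>k\<in>{..<n}-{i}. \<bar>x k - y k\<bar>) = 0"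
    using S by linarith+
  have "\<forall>k\<in>{..<n}-{i}. \<bar>x k - y k\<bar> = 0"
    using e0 by (subst (asm) sum_nonneg_eq_0_iff) auto
  then have oth: "\<And>k. k \<noteq> i \<Longrightarrow> y k = x k"
    using assms(1,2) unfolding Gn_verts_def by (case_tac "k < n") auto
  have "y = mv x i (y i - x i)"
    using oth by (auto simp: mv_def)
  moreover have "y i - x i \<in> {1,-1}" using e1 by auto
  ultimately show ?thesis using i by blast
qed

lemma Gn_nb_finite: "x \<in> Gn_verts n \<Longrightarrow> finite {w\<in>Gn_verts n. Gn_adj n x w}"
proof -
  assume x: "x \<in> Gn_verts n"
  have "{w\<in>Gn_verts n. Gn_adj n x w} \<subseteq> (\<lambda>(i,s). mv x i s) ` ({..<n} \<times> {1,-1})"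
    using Gn_adj_char[OF x] by fastforce
  then show ?thesis by (rule finite_subset) simp
qed

context
  fixes n \<rho> :: nat and C :: "(nat \<Rightarrow> int) set" and \<alpha> :: "nat \<Rightarrow> nat \<Rightarrow> nat"
  assumes n1: "n \<ge> 1"
    and crc: "is_CRC (Gn_verts n) (Gn_adj n) C \<rho> \<alpha>"
    and r1: "\<rho> \<ge> 1"
    and a00: "\<alpha> 0 0 = 0"
    and a11: "\<alpha> 1 1 = 1"
begin

abbreviation "V \<equiv> Gn_verts n"
abbreviation "E \<equiv> Gn_adj n"
abbreviation "d \<equiv> dist_to V E C"

lemma CV: "C \<subseteq> V" using crc unfolding is_CRC_def by auto
lemma reach: "v \<in> V \<Longrightarrow> \<exists>c\<in>C. \<exists>k. walk V E k v c"
  using crc unfolding is_CRC_def has_covering_radius_def by auto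
lemma cnt: "i \<le> \<rho> \<Longrightarrow> j \<le> \<rho> \<Longrightarrow> v \<in> V \<Longrightarrow> d v = i \<Longrightarrow> card {w\<in>V. E v w \<and> d w = j} = \<alpha> i j"
  using crc unfolding is_CRC_def by auto

lemma d0C: "v \<in> V \<Longrightarrow> d v = 0 \<longleftrightarrow> v \<in> C"
  using dist0 dist0_iff reach by metis

lemma nbC: assumes "c \<in> C" "i < n" "s \<in> {1,-1}" shows "d (mv c i s) = 1"
proof -
  have cV: "c \<in> V" using assms CV by auto
  have wV: "mv c i s \<in> V" using mv_V cV assms by auto
  have "card {w\<in>V. E c w \<and> d w = 0} = 0" using cnt[of 0 0 c] cV d0C assms a00 by simp
  moreover have "finite {w\<in>V. E c w \<and> d w = 0}"
    by (rule finite_subset[OF _ Gn_nb_finite[OF cV]]) auto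
  ultimately have emp: "{w\<in>V. E c w \<and> d w = 0} = {}" by simp
  have Ec: "E c (mv c i s)" using Gn_adj_mv[OF assms(2,3)] .
  have nz: "d (mv c i s) \<noteq> 0"
  proof
    assume "d (mv c i s) = 0"
    then have "mv c i s \<in> {w\<in>V. E c w \<and> d w = 0}" using wV Ec by simp
    then show False using emp by simp
  qed
  have "d (mv c i s) \<le> d c + 1"
    by (rule dist_adj[OF cV]) (use Ec Gn_adj_sym reach cV in auto)
  then show ?thesis using nz dist0[OF assms(1)] by simp
qed

lemma N1_uniq: "v \<in> V \<Longrightarrow> d v = 1 \<Longrightarrow> w1 \<in> V \<Longrightarrow> E v w1 \<Longrightarrow> d w1 = 1 \<Longrightarrow>
   w2 \<in> V \<Longrightarrow> E v w2 \<Longrightarrow> d w2 = 1 \<Longrightarrow> w1 = w2"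
proof -
  assume a: "v \<in> V" "d v = 1" "w1 \<in> V" "E v w1" "d w1 = 1" "w2 \<in> V" "E v w2" "d w2 = 1"
  then have "card {w\<in>V. E v w \<and> d w = 1} = 1" using cnt[of 1 1 v] r1 a11 by simp
  then obtain z where z: "{w\<in>V. E v w \<and> d w = 1} = {z}" by (auto simp: card_1_singleton_iff)
  have "w1 \<in> {w\<in>V. E v w \<and> d w = 1}" "w2 \<in> {w\<in>V. E v w \<and> d w = 1}" using a by auto
  then have "w1 \<in> {z}" "w2 \<in> {z}" unfolding z .
  then show "w1 = w2" by simp
qed

lemma N1_ex: "v \<in> V \<Longrightarrow> d v = 1 \<Longrightarrow> \<exists>w\<in>V. E v w \<and> d w = 1"
  using cnt[of 1 1 v] r1 a11 by (auto simp: card_1_singleton_iff)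

lemma lemB:
  assumes c: "c \<in> C" and ij: "i < n" "j < n" "i \<noteq> j" and st: "s \<in> {1,-1}" "t \<in> {1,-1}"
  shows "d (mv (mv c i s) j t) \<noteq> 1"
proof
  assume dy: "d (mv (mv c i s) j t) = 1"
  have cV: "c \<in> V" using c CV by auto
  let ?x = "mv c i s" and ?z = "mv c j t" and ?y = "mv (mv c i s) j t"
  have xV: "?x \<in> V" and zV: "?z \<in> V" and yV: "?y \<in> V" using cV ij mv_V by auto
  have "d ?x = 1" "d ?z = 1" using nbC c ij st by auto
  have "?x = mv ?y j (-t)" by (simp add: mv_inv)
  then have Ex: "E ?y ?x" using Gn_adj_mv[OF ij(2), of "-t" ?y] st by auto
  have "?y = mv ?z i s" using mv_comm ij by auto
  then have "?z = mv ?y i (-s)" by (simp add: mv_inv)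
  then have Ez: "E ?y ?z" using Gn_adj_mv[OF ij(1), of "-s" ?y] st by auto
  have "?x \<noteq> ?z" using mv_eq[of s t c i j] st ij by auto
  then show False using N1_uniq[OF yV dy xV Ex _ zV Ez] \<open>d ?x = 1\<close> \<open>d ?z = 1\<close> by blast
qed

lemma lemB2:
  assumes c: "c \<in> C" and i: "i < n" and s: "s \<in> {1,-1}"
  shows "d (mv (mv c i s) i s) = 1"
proof -
  have cV: "c \<in> V" using c CV by auto
  let ?x = "mv c i s"
  have xV: "?x \<in> V" using cV i mv_V by auto
  have "d ?x = 1" using nbC c i s by auto
  then obtain w where w: "w \<in> V" "E ?x w" "d w = 1" using N1_ex xV by blast
  then obtain k u where ku: "k < n" "u \<in> {1,-1}" "w = mv ?x k u" using Gn_adj_char xV by blast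
  show ?thesis
  proof (cases "k = i")
    case True
    show ?thesis
    proof (cases "u = s")
      case True then show ?thesis using ku w \<open>k = i\<close> by simp
    next
      case False
      then have "u = -s" using ku s by auto
      then have "w = c" using ku \<open>k = i\<close> mv_inv by simp
      then show ?thesis using w dist0[OF c] by simp
    qed
  next
    case False
    then show ?thesis using lemB[OF c i ku(1) _ s ku(2)] w ku by auto
  qed
qed

lemma lemC:
  assumes c: "c \<in> C" and i: "i < n" and s: "s \<in> {1,-1}" and k: "k < n" and u: "u \<in> {1,-1}"
    and c': "mv (mv c i s) k u \<in> C"
  shows "k = i \<and> u = -s"
proof (cases "k = i")
  case True
  show ?thesis
  proof (cases "u = s")
    case True
    then have "d (mv (mv c i s) k u) = 1" using lemB2[OF c i s] \<open>k = i\<close> by simp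
    then show ?thesis using c' dist0 by (metis zero_neq_one)
  next
    case False then show ?thesis using u s \<open>k = i\<close> by auto
  qed
next
  case False
  let ?c' = "mv (mv c i s) k u" and ?z = "mv c k u"
  have cV: "c \<in> V" using c CV by auto
  have zV: "?z \<in> V" using cV k mv_V by auto
  have "?c' = mv ?z i s" using mv_comm False by auto
  then have z: "?z = mv ?c' i (-s)" by (simp add: mv_inv)
  have s': "-s \<in> {1,-1}" using s by auto
  have dz: "d ?z = 1" using nbC c k u by auto
  have d1: "d (mv ?z k u) = 1" using lemB2[OF c k u] .
  have d2: "d (mv ?z i (-s)) = 1" using lemB2[OF c' i s'] z by simp
  have "mv ?z k u = mv ?z i (-s)"
    by (rule N1_uniq[OF zV dz mv_V[OF zV k] Gn_adj_mv[OF k u] d1 mv_V[OF zV i] Gn_adj_mv[OF i s'] d2])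
  then have "k = i" using mv_eq[of u "-s" ?z k i] u s by auto
  with False show ?thesis by simp
qed

lemma Cne: "\<exists>c. c \<in> C"
proof -
  have "(\<lambda>_. 0) \<in> V" by (simp add: Gn_verts_def)
  then show ?thesis using reach by blast
qed

lemma a10: "\<alpha> 1 0 = 1"
proof -
  obtain c where c: "c \<in> C" using Cne by blast
  have cV: "c \<in> V" using c CV by auto
  have z: "0 < n" using n1 by simp
  let ?x = "mv c 0 1"
  have xV: "?x \<in> V" using cV z mv_V by auto
  have dx: "d ?x = 1" using nbC[OF c z] by simp
  have "{w\<in>V. E ?x w \<and> d w = 0} = {c}"
  proof (intro set_eqI iffI)
    fix w assume "w \<in> {w\<in>V. E ?x w \<and> d w = 0}"
    then have w: "w \<in> V" "E ?x w" "w \<in> C" using d0C by auto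
    then obtain k u where ku: "k < n" "u \<in> {1,-1}" "w = mv ?x k u" using Gn_adj_char xV by blast
    then have "k = 0 \<and> u = -1" using lemC[OF c z _ ku(1,2)] w by auto
    then show "w \<in> {c}" using ku mv_inv[of c 0 1] by simp
  next
    fix w assume "w \<in> {c}"
    then show "w \<in> {w\<in>V. E ?x w \<and> d w = 0}"
      using cV dist0[OF c] Gn_adj_mv[OF z, of "-1" ?x] mv_inv[of c 0 1] by auto
  qed
  then show ?thesis using cnt[of 1 0 ?x] r1 xV dx by simp
qed

lemma lemD:
  assumes c: "c \<in> C" and i: "i < n" and s: "s \<in> {1,-1}"
  shows "mv (mv (mv c i s) i s) i s \<in> C"
proof -
  have cV: "c \<in> V" using c CV by auto
  let ?x = "mv c i s" and ?y = "mv (mv c i s) i s"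
  have xV: "?x \<in> V" and yV: "?y \<in> V" using cV i mv_V by auto
  have dy: "d ?y = 1" using lemB2[OF c i s] .
  have dx: "d ?x = 1" using nbC[OF c i s] .
  have "card {w\<in>V. E ?y w \<and> d w = 0} = 1" using cnt[of 1 0 ?y] r1 yV dy a10 by simp
  then obtain w0 where "w0 \<in> {w\<in>V. E ?y w \<and> d w = 0}" by (auto simp: card_1_singleton_iff)
  then have w0: "w0 \<in> V" "E ?y w0" "w0 \<in> C" using d0C by auto
  then obtain k u where ku: "k < n" "u \<in> {1,-1}" "w0 = mv ?y k u" using Gn_adj_char yV by blast
  have u': "-u \<in> {1,-1}" using ku by auto
  have s': "-s \<in> {1,-1}" using s by auto
  show ?thesis
  proof (cases "k = i")
    case True
    show ?thesis
    proof (cases "u = s")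
      case True then show ?thesis using ku w0 \<open>k = i\<close> by simp
    next
      case False
      then have "u = -s" using ku s by auto
      then have "w0 = ?x" using ku \<open>k = i\<close> mv_inv by simp
      then show ?thesis using w0 dx dist0 by (metis zero_neq_one)
    qed
  next
    case False
    have y: "?y = mv w0 k (-u)" using ku mv_inv[of ?y k u] by simp
    have d1: "d (mv ?y k (-u)) = 1" using lemB2[OF w0(3) ku(1) u'] y by simp
    have xe: "?x = mv ?y i (-s)" using mv_inv by simp
    have Ex0: "E ?y (mv ?y i (-s))" using Gn_adj_mv[OF i s'] .
    then have Ex: "E ?y ?x" by (simp only: mv_inv)
    have "mv ?y k (-u) = ?x"
      by (rule N1_uniq[OF yV dy mv_V[OF yV ku(1)] Gn_adj_mv[OF ku(1) u'] d1 xV Ex dx])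
    then have "mv ?y k (-u) = mv ?y i (-s)" using xe by (rule trans)
    then have "k = i" using mv_eq[of "-u" "-s" ?y k i] u' s' by auto
    with False show ?thesis by simp
  qed
qed

lemma mv3: "mv (mv (mv c i s) i s) i s = c(i := c i + 3 * s)"
  unfolding mv_def by auto

lemma shift_nat: "c \<in> C \<Longrightarrow> i < n \<Longrightarrow> c(i := c i + 3 * int m) \<in> C \<and> c(i := c i - 3 * int m) \<in> C"
proof (induction m)
  case 0 then show ?case by simp
next
  case (Suc m)
  let ?a = "c(i := c i + 3 * int m)" and ?b = "c(i := c i - 3 * int m)"
  have a: "?a \<in> C" and b: "?b \<in> C" using Suc.IH Suc.prems by blast+
  have "?a(i := ?a i + 3 * 1) \<in> C" using lemD[OF a Suc.prems(2), of 1] mv3 by simp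
  moreover have "?a(i := ?a i + 3 * 1) = c(i := c i + 3 * int (Suc m))" by (simp add: algebra_simps)
  moreover have "?b(i := ?b i + 3 * (-1)) \<in> C" using lemD[OF b Suc.prems(2), of "-1"] mv3 by simp
  moreover have "?b(i := ?b i + 3 * (-1)) = c(i := c i - 3 * int (Suc m))" by (simp add: algebra_simps)
  ultimately show ?case by metis
qed

lemma shift: "c \<in> C \<Longrightarrow> i < n \<Longrightarrow> c(i := c i + 3 * k) \<in> C"
proof (cases "k \<ge> 0")
  case True
  assume "c \<in> C" "i < n"
  then show ?thesis using shift_nat[of c i "nat k"] True by simp
next
  case False
  assume "c \<in> C" "i < n"
  then have "c(i := c i - 3 * int (nat (-k))) \<in> C" using shift_nat[of c i "nat (-k)"] by blast
  then show ?thesis using False by simp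
qed

lemma periodic_aux: "m \<le> n \<Longrightarrow> x \<in> C \<Longrightarrow> (\<forall>i. x i mod 3 = y i mod 3) \<Longrightarrow> (\<forall>i\<ge>m. x i = y i) \<Longrightarrow> y \<in> C"
proof (induction m arbitrary: x)
  case 0
  then have "x = y" by auto
  then show ?case using 0 by simp
next
  case (Suc m)
  let ?x = "x(m := y m)"
  have "3 dvd (y m - x m)" using Suc.prems(3) by (metis mod_eq_dvd_iff)
  then obtain k where k: "y m - x m = 3 * k" by (auto simp: dvd_def)
  have "?x = x(m := x m + 3 * k)" using k by (metis add_diff_cancel_left' add_diff_eq diff_add_cancel)
  then have "?x \<in> C" using shift[OF Suc.prems(2), of m k] Suc.prems(1) by simp
  moreover have "\<forall>i. ?x i mod 3 = y i mod 3" using Suc.prems(3) by simp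
  moreover have "\<forall>i\<ge>m. ?x i = y i"
  proof (intro allI impI)
    fix i assume "m \<le> i"
    then show "?x i = y i" using Suc.prems(4) by (cases "i = m") auto
  qed
  ultimately show ?case using Suc.IH Suc.prems(1) by simp
qed

lemma periodic: "x \<in> C \<Longrightarrow> y \<in> V \<Longrightarrow> (\<forall>i. x i mod 3 = y i mod 3) \<Longrightarrow> y \<in> C"
proof -
  assume a: "x \<in> C" "y \<in> V" "\<forall>i. x i mod 3 = y i mod 3"
  have "x \<in> V" using a CV by auto
  then have "\<forall>i\<ge>n. x i = y i" using a(2) by (simp add: Gn_verts_def)
  then show "y \<in> C" using periodic_aux[of n x y] a by simp
qed

end




lemma mod3_V: "x \<in> Gn_verts n \<Longrightarrow> mod3 x \<in> H3_verts n"
  by (auto simp: Gn_verts_def H3_verts_def mod3_def nat_less_iff)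

lemma mod3_surj: "h \<in> H3_verts n \<Longrightarrow> \<exists>x\<in>Gn_verts n. mod3 x = h"
proof -
  assume h: "h \<in> H3_verts n"
  have "(\<lambda>i. int (h i)) \<in> Gn_verts n" using h by (auto simp: Gn_verts_def H3_verts_def)
  moreover have "mod3 (\<lambda>i. int (h i)) = h"
  proof (rule ext)
    fix i show "mod3 (\<lambda>i. int (h i)) i = h i"
      using h by (cases "i < n") (auto simp: H3_verts_def mod3_def)
  qed
  ultimately show ?thesis by blast
qed

lemma H3_adj_char: "H3_adj n a b \<longleftrightarrow> (\<exists>i<n. a i \<noteq> b i \<and> (\<forall>j<n. j \<noteq> i \<longrightarrow> a j = b j))"
  unfolding H3_adj_def
proof
  assume "card {i. i < n \<and> a i \<noteq> b i} = 1"
  then obtain x where x: "{i. i < n \<and> a i \<noteq> b i} = {x}" by (auto simp: card_1_singleton_iff)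
  then have "x < n \<and> a x \<noteq> b x" by blast
  moreover have "\<forall>j<n. j \<noteq> x \<longrightarrow> a j = b j" using x by blast
  ultimately show "\<exists>i<n. a i \<noteq> b i \<and> (\<forall>j<n. j \<noteq> i \<longrightarrow> a j = b j)" by blast
next
  assume "\<exists>i<n. a i \<noteq> b i \<and> (\<forall>j<n. j \<noteq> i \<longrightarrow> a j = b j)"
  then obtain i where "i<n" "a i \<noteq> b i" "\<forall>j<n. j \<noteq> i \<longrightarrow> a j = b j" by blast
  then have "{i. i < n \<and> a i \<noteq> b i} = {i}" by blast
  then show "card {i. i < n \<and> a i \<noteq> b i} = 1" by simp
qed

lemma mod3_mv: "mod3 (mv x i s) = (mod3 x)(i := nat ((x i + s) mod 3))"
  by (auto simp: mod3_def mv_def)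

lemma nat_mod3_eq: "nat ((a::int) mod 3) = nat (b mod 3) \<longleftrightarrow> a mod 3 = b mod 3"
  by (simp add: nat_eq_iff)

lemma mod3_cases: "(a::int) mod 3 = 0 \<and> (a+1) mod 3 = 1 \<and> (a-1) mod 3 = 2 \<or>
   a mod 3 = 1 \<and> (a+1) mod 3 = 2 \<and> (a-1) mod 3 = 0 \<or> a mod 3 = 2 \<and> (a+1) mod 3 = 0 \<and> (a-1) mod 3 = 1"
proof -
  have p: "(a+1) mod 3 = (a mod 3 + 1) mod 3" by (simp add: mod_add_left_eq)
  have m: "(a-1) mod 3 = (a mod 3 - 1) mod 3" by (simp add: mod_diff_left_eq)
  have "0 \<le> a mod 3" "a mod 3 < 3" by simp_all
  then have "a mod 3 = 0 \<or> a mod 3 = 1 \<or> a mod 3 = 2" by linarith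
  then show ?thesis using p m by auto
qed
lemma mod3_neq: "(s::int) \<in> {1,-1} \<Longrightarrow> nat ((a + s) mod 3) \<noteq> nat (a mod 3)"
  unfolding nat_mod3_eq using mod3_cases[of a] by auto

lemma mod3_nb: "x \<in> Gn_verts n \<Longrightarrow> {w'\<in>H3_verts n. H3_adj n (mod3 x) w'} = mod3 ` {w\<in>Gn_verts n. Gn_adj n x w}"
proof (intro set_eqI iffI)
  fix w' assume x: "x \<in> Gn_verts n" and "w' \<in> {w'\<in>H3_verts n. H3_adj n (mod3 x) w'}"
  then have w'V: "w' \<in> H3_verts n" and "H3_adj n (mod3 x) w'" by auto
  then obtain i where i: "i < n" "mod3 x i \<noteq> w' i" "\<forall>j<n. j \<noteq> i \<longrightarrow> mod3 x j = w' j"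
    using H3_adj_char by blast
  have w3: "w' i < 3" using w'V i by (auto simp: H3_verts_def)
  define s :: int where "s = (if int (w' i) = (x i + 1) mod 3 then 1 else -1)"
  have s: "s \<in> {1,-1}" by (simp add: s_def)
  have ne: "int (w' i) \<noteq> x i mod 3"
  proof
    assume h: "int (w' i) = x i mod 3"
    have "w' i = nat (int (w' i))" by simp
    also have "\<dots> = nat (x i mod 3)" using h by (rule arg_cong)
    also have "\<dots> = mod3 x i" by (simp add: mod3_def)
    finally show False using i(2) by simp
  qed
  have "int (w' i) = (x i + s) mod 3"
  proof (cases "int (w' i) = (x i + 1) mod 3")
    case True then show ?thesis by (simp add: s_def)
  next
    case False
    then have "int (w' i) = (x i - 1) mod 3" using ne w3 mod3_cases[of "x i"] by linarith
    then show ?thesis using False by (simp add: s_def)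
  qed
  then have wi: "nat ((x i + s) mod 3) = w' i" by simp
  have "mod3 (mv x i s) = w'"
  proof (rule ext)
    fix j show "mod3 (mv x i s) j = w' j"
    proof (cases "j = i")
      case True then show ?thesis using wi by (simp add: mod3_mv)
    next
      case False
      show ?thesis
      proof (cases "j < n")
        case True then show ?thesis using False i(3) by (simp add: mod3_mv)
      next
        case False
        then show ?thesis using x w'V \<open>j \<noteq> i\<close> by (simp add: mv_def Gn_verts_def H3_verts_def mod3_def)
      qed
    qed
  qed
  moreover have "mv x i s \<in> Gn_verts n" using mv_V x i(1) by auto
  moreover have "Gn_adj n x (mv x i s)" using Gn_adj_mv i(1) s by auto
  ultimately show "w' \<in> mod3 ` {w\<in>Gn_verts n. Gn_adj n x w}" by blast
next
  fix w' assume x: "x \<in> Gn_verts n" and "w' \<in> mod3 ` {w\<in>Gn_verts n. Gn_adj n x w}"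
  then obtain w where w: "w \<in> Gn_verts n" "Gn_adj n x w" "w' = mod3 w" by auto
  then obtain i s where hi: "i < n" "s \<in> {1,-1}" "w = mv x i s" using Gn_adj_char x by blast
  have "H3_adj n (mod3 x) w'"
    unfolding H3_adj_char using hi w mod3_neq[OF hi(2), of "x i"]
    by (intro exI[of _ i]) (auto simp: mv_def mod3_def)
  then show "w' \<in> {w'\<in>H3_verts n. H3_adj n (mod3 x) w'}" using mod3_V w by auto
qed

lemma mod3_inj: "x \<in> Gn_verts n \<Longrightarrow> inj_on mod3 {w\<in>Gn_verts n. Gn_adj n x w}"
proof (rule inj_onI)
  fix w1 w2 assume x: "x \<in> Gn_verts n" and "w1 \<in> {w\<in>Gn_verts n. Gn_adj n x w}"
    and "w2 \<in> {w\<in>Gn_verts n. Gn_adj n x w}" and eq: "mod3 w1 = mod3 w2"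
  then obtain i s j t where hi: "i < n" "s \<in> {1,-1}" "w1 = mv x i s"
    and jt: "j < n" "t \<in> {1,-1}" "w2 = mv x j t" using Gn_adj_char x by (metis (no_types, lifting) mem_Collect_eq)
  have "i = j"
  proof (rule ccontr)
    assume "i \<noteq> j"
    then have "mod3 w1 i \<noteq> mod3 w2 i" using hi jt mod3_neq[OF hi(2), of "x i"]
      by (simp add: mod3_def mv_def)
    then show False using eq by simp
  qed
  moreover have "s = t"
  proof (rule ccontr)
    assume "s \<noteq> t"
    then have "(x i + s) mod 3 \<noteq> (x i + t) mod 3" using hi(2) jt(2) mod3_cases[of "x i"] by auto
    then have "mod3 w1 i \<noteq> mod3 w2 i" using hi jt \<open>i = j\<close> by (simp add: mod3_mv nat_mod3_eq)
    then show False using eq by simp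
  qed
  ultimately show "w1 = w2" using hi jt by simp
qed

theorem mainTheorem7:
  fixes n \<rho> :: nat and C :: "(nat \<Rightarrow> int) set" and \<alpha> :: "nat \<Rightarrow> nat \<Rightarrow> nat"
  assumes "n \<ge> 1"
    and "is_CRC (Gn_verts n) (Gn_adj n) C \<rho> \<alpha>"
    and "\<rho> \<ge> 1"
    and "\<alpha> 0 0 = 0"
    and "\<alpha> 1 1 = 1"
  shows "\<alpha> 1 0 = 1 \<and>
    (\<exists>D. is_CRC (H3_verts n) (H3_adj n) D \<rho> \<alpha> \<and>
         C = {x \<in> Gn_verts n. mod3 x \<in> D})"
proof -
  note P = assms(1-5)
  have CV: "C \<subseteq> Gn_verts n" using CV[OF P] .
  have CD: "C = {x \<in> Gn_verts n. mod3 x \<in> mod3 ` C}"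
  proof (intro set_eqI iffI)
    fix x assume "x \<in> C" then show "x \<in> {x \<in> Gn_verts n. mod3 x \<in> mod3 ` C}" using CV by auto
  next
    fix x assume "x \<in> {x \<in> Gn_verts n. mod3 x \<in> mod3 ` C}"
    then obtain c where c: "c \<in> C" "mod3 c = mod3 x" "x \<in> Gn_verts n" by auto
    have "\<forall>i. c i mod 3 = x i mod 3"
    proof
      fix i have "mod3 c i = mod3 x i" using c by simp
      then show "c i mod 3 = x i mod 3" by (simp add: mod3_def nat_mod3_eq)
    qed
    then show "x \<in> C" using periodic[OF P c(1) c(3)] by simp
  qed
  have "is_CRC (H3_verts n) (H3_adj n) (mod3 ` C) \<rho> \<alpha>"
    by (rule cover_CRC[OF P(2) mod3_V mod3_surj mod3_nb mod3_inj CD])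
       (use CV mod3_V in auto)
  then show ?thesis using a10[OF P] CD by blast
qed


end
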